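(* Let $p_1,p_2$ be real bivariate polynomials with $p_1\neq 0$, $\deg p_2\le \deg p_1+1$, and suppose $p_1$ has no multiple factors. Then there is $\epsilon_0>0$ such that for every $\epsilon$ with $|\epsilon|<\epsilon_0$ the polynomial $p_1+\epsilon p_2$ has no multiple factors.
   Context: A polynomial $p$ has a multiple factor if $r^2$ divides $p$ for some polynomial $r$ of degree $\ge 1$. *)

theory Defs
  imports "HOL-Computational_Algebra.Polynomial"
begin

text \<open>Real bivariate polynomials R[x,y] are represented as R[x][y], i.e. the type
  real poly poly: the outer variable is y, coefficients are polynomials in x.\<close>

definition total_degree :: "real poly poly \<Rightarrow> nat" where
  "total_degree p = Max ({0} \<union> {i + degree (coeff p i) | i. coeff p i \<noteq> 0})"

definition has_multiple_factor :: "real poly poly \<Rightarrow> bool" where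
  "has_multiple_factor p \<longleftrightarrow> (\<exists>r. total_degree r \<ge> 1 \<and> r ^ 2 dvd p)"

end

theory Submission
  imports Defs "HOL-Library.Infinite_Set"
begin

abbreviation cf :: "real poly poly \<Rightarrow> nat \<Rightarrow> nat \<Rightarrow> real" where
  "cf f i j \<equiv> coeff (coeff f i) j"

lemma tdeg_set_finite: "finite {i + degree (coeff p i) | i. coeff p i \<noteq> 0}"
proof -
  have "{i + degree (coeff p i) | i. coeff p i \<noteq> 0} \<subseteq> (\<lambda>i. i + degree (coeff p i)) ` {..degree p}"
    using le_degree by fastforce
  then show ?thesis by (rule finite_subset) auto
qed

lemma tdeg_le_iff: "total_degree f \<le> k \<longleftrightarrow> (\<forall>i j. cf f i j \<noteq> 0 \<longrightarrow> i + j \<le> k)"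
proof -
  have "total_degree f \<le> k \<longleftrightarrow> (\<forall>i. coeff f i \<noteq> 0 \<longrightarrow> i + degree (coeff f i) \<le> k)"
    unfolding total_degree_def using tdeg_set_finite[of f] by auto
  also have "\<dots> \<longleftrightarrow> (\<forall>i j. cf f i j \<noteq> 0 \<longrightarrow> i + j \<le> k)"
  proof safe
    fix i j assume h: "\<forall>i. coeff f i \<noteq> 0 \<longrightarrow> i + degree (coeff f i) \<le> k" "cf f i j \<noteq> 0"
    then have "coeff f i \<noteq> 0" by auto
    with h show "i + j \<le> k" using le_degree[of "coeff f i" j] by force
  next
    fix i assume h: "\<forall>i j. cf f i j \<noteq> 0 \<longrightarrow> i + j \<le> k" "coeff f i \<noteq> 0"
    then show "i + degree (coeff f i) \<le> k" by auto
  qed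
  finally show ?thesis .
qed

lemma tdeg_ge: "cf f i j \<noteq> 0 \<Longrightarrow> i + j \<le> total_degree f"
  using tdeg_le_iff[of f "total_degree f"] by auto

lemma tdeg_attained: assumes "f \<noteq> 0" shows "\<exists>i j. i + j = total_degree f \<and> cf f i j \<noteq> 0"
proof -
  let ?S = "{i + degree (coeff f i) | i. coeff f i \<noteq> 0}"
  have ne: "?S \<noteq> {}" using assms by (auto simp: poly_eq_iff)
  have "total_degree f = Max ?S" unfolding total_degree_def
    using tdeg_set_finite[of f] ne by (simp add: Max_insert)
  moreover have "Max ?S \<in> ?S" using tdeg_set_finite[of f] ne by (rule Max_in)
  ultimately obtain i where "coeff f i \<noteq> 0" "total_degree f = i + degree (coeff f i)" by auto
  then show ?thesis by (intro exI[of _ i] exI[of _ "degree (coeff f i)"]) auto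
qed

lemma tdeg_cong: "(\<And>i j. cf f i j = 0 \<longleftrightarrow> cf g i j = 0) \<Longrightarrow> total_degree f = total_degree g"
  by (metis le_antisym tdeg_le_iff order_refl)

lemma cf_smult: "cf (smult [:c:] f) i j = c * cf f i j"
  by simp

lemma tdeg_smult: "c \<noteq> 0 \<Longrightarrow> total_degree (smult [:c:] f) = total_degree f"
  by (rule tdeg_cong) simp

lemma tdeg_smult_le: "total_degree (smult [:c:] f) \<le> total_degree f"
  unfolding tdeg_le_iff by (auto intro: tdeg_ge)

lemma tdeg_add_le: "total_degree f \<le> k \<Longrightarrow> total_degree g \<le> k \<Longrightarrow> total_degree (f + g) \<le> k"
  unfolding tdeg_le_iff by (metis add.right_neutral coeff_add)


lemma lin_power: "[:0, c:] ^ i = monom (c ^ i) i"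
proof -
  have "[:0, c:] = monom c 1" by (simp add: monom_Suc monom_0)
  then show ?thesis by (simp add: monom_power)
qed

lemma coeff_spec:
  "coeff (poly f [:0, c:]) t = (\<Sum>i\<le>degree f. (if i \<le> t then c ^ i * cf f i (t - i) else 0))"
  unfolding poly_altdef coeff_sum lin_power
  by (intro sum.cong refl) (auto simp: mult.commute[of "coeff f _"] coeff_monom_mult)

definition hp :: "real poly poly \<Rightarrow> real poly" where
  "hp f = (\<Sum>i\<le>degree f. monom (if i \<le> total_degree f then cf f i (total_degree f - i) else 0) i)"

lemma poly_hp: "poly (hp f) c = coeff (poly f [:0, c:]) (total_degree f)"
  unfolding hp_def coeff_spec poly_sum poly_monom
  by (intro sum.cong refl) auto

lemma hp_nz: assumes "f \<noteq> 0" shows "hp f \<noteq> 0"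
proof -
  obtain i j where ij: "i + j = total_degree f" "cf f i j \<noteq> 0" using tdeg_attained[OF assms] by blast
  then have "coeff f i \<noteq> 0" by auto
  then have "i \<le> degree f" by (rule le_degree)
  then have "coeff (hp f) i = cf f i j" unfolding hp_def coeff_sum using ij
    by (simp add: ij(1)[symmetric])
  with ij show ?thesis by auto
qed

lemma spec_deg_le: "degree (poly f [:0, c:]) \<le> total_degree f"
proof (rule degree_le)
  show "\<forall>t>total_degree f. coeff (poly f [:0, c:]) t = 0"
    unfolding coeff_spec
  proof (intro allI impI sum.neutral ballI)
    fix t i assume "total_degree f < t"
    then show "(if i \<le> t then c ^ i * cf f i (t - i) else 0) = 0"
      using tdeg_ge[of f i "t - i"] by auto
  qed
qed

lemma spec_deg_eq: "poly (hp f) c \<noteq> 0 \<Longrightarrow> degree (poly f [:0, c:]) = total_degree f"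
  using spec_deg_le[of f c] le_degree[of "poly f [:0, c:]" "total_degree f"] poly_hp[of f c]
  by auto

lemma tdeg_mult: assumes "f \<noteq> 0" "g \<noteq> 0"
  shows "total_degree (f * g) = total_degree f + total_degree g"
proof -
  have "hp f * hp g * hp (f * g) \<noteq> 0" using assms hp_nz by auto
  then obtain c where "poly (hp f * hp g * hp (f * g)) c \<noteq> 0"
    using poly_all_0_iff_0 by blast
  then have c: "poly (hp f) c \<noteq> 0" "poly (hp g) c \<noteq> 0" "poly (hp (f*g)) c \<noteq> 0" by auto
  have "poly (hp f) c \<noteq> 0" by fact
  then have nz1: "poly f [:0, c:] \<noteq> 0" using poly_hp[of f c] by auto
  have nz2: "poly g [:0, c:] \<noteq> 0" using poly_hp[of g c] c by auto
  have "total_degree (f * g) = degree (poly (f*g) [:0, c:])" using spec_deg_eq[OF c(3)] by simp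
  also have "\<dots> = degree (poly f [:0, c:]) + degree (poly g [:0, c:])"
    by (simp add: degree_mult_eq nz1 nz2)
  also have "\<dots> = total_degree f + total_degree g" using spec_deg_eq c by simp
  finally show ?thesis .
qed


lemma bw_finite:
  fixes u :: "nat \<Rightarrow> 'a \<Rightarrow> real"
  assumes "finite S" "\<And>n x. x \<in> S \<Longrightarrow> \<bar>u n x\<bar> \<le> B"
  shows "\<exists>\<sigma> L. strict_mono \<sigma> \<and> (\<forall>x\<in>S. (\<lambda>n. u (\<sigma> n) x) \<longlonglongrightarrow> L x)"
  using assms
proof (induction S rule: finite_induct)
  case empty
  show ?case by (intro exI[of _ id]) (auto simp: strict_mono_def)
next
  case (insert a S)
  then obtain \<sigma> L where s: "strict_mono \<sigma>" "\<forall>x\<in>S. (\<lambda>n. u (\<sigma> n) x) \<longlonglongrightarrow> L x" by auto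
  have "Bseq (\<lambda>n. u (\<sigma> n) a)" using insert.prems by (intro BseqI'[of _ B]) auto
  obtain \<tau> where t: "strict_mono \<tau>" "monoseq (\<lambda>n. u (\<sigma> (\<tau> n)) a)"
    using seq_monosub[of "\<lambda>n. u (\<sigma> n) a"] by auto
  have "Bseq (\<lambda>n. u (\<sigma> (\<tau> n)) a)" using insert.prems by (intro BseqI'[of _ B]) auto
  with t have "convergent (\<lambda>n. u (\<sigma> (\<tau> n)) a)" using Bseq_monoseq_convergent by blast
  then obtain la where la: "(\<lambda>n. u (\<sigma> (\<tau> n)) a) \<longlonglongrightarrow> la" by (auto simp: convergent_def)
  have "\<forall>x\<in>S. (\<lambda>n. u (\<sigma> (\<tau> n)) x) \<longlonglongrightarrow> L x"
    using LIMSEQ_subseq_LIMSEQ[OF _ t(1)] s(2) by (auto simp: o_def)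
  then show ?case using la s(1) t(1)
    using strict_mono_o[OF s(1) t(1)] unfolding o_def
    by (intro exI[of _ "\<sigma> \<circ> \<tau>"] exI[of _ "L(a := la)"]) auto
qed

definition conv :: "(nat \<Rightarrow> real poly poly) \<Rightarrow> real poly poly \<Rightarrow> bool" where
  "conv F f \<longleftrightarrow> (\<forall>i j. (\<lambda>n. cf (F n) i j) \<longlonglongrightarrow> cf f i j)"

lemma cf_mult: "cf (f * g) a b = (\<Sum>i\<le>a. \<Sum>j\<le>b. cf f i j * cf g (a - i) (b - j))"
  by (simp add: coeff_mult coeff_sum)

lemma conv_mult: "conv F f \<Longrightarrow> conv G g \<Longrightarrow> conv (\<lambda>n. F n * G n) (f * g)"
  unfolding conv_def cf_mult by (intro allI tendsto_sum tendsto_mult) auto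

lemma conv_subseq: "conv F f \<Longrightarrow> strict_mono \<sigma> \<Longrightarrow> conv (\<lambda>n. F (\<sigma> n)) f"
  unfolding conv_def
proof (intro allI)
  fix i j assume "\<forall>i j. (\<lambda>n. cf (F n) i j) \<longlonglongrightarrow> cf f i j" "strict_mono \<sigma>"
  then show "(\<lambda>n. cf (F (\<sigma> n)) i j) \<longlonglongrightarrow> cf f i j"
    using LIMSEQ_subseq_LIMSEQ[of "\<lambda>n. cf (F n) i j" "cf f i j" \<sigma>] by (auto simp: o_def)
qed

definition bx :: "nat \<Rightarrow> (nat \<times> nat) set" where "bx K = {..K} \<times> {..K}"

definition nrm :: "nat \<Rightarrow> real poly poly \<Rightarrow> real" where
  "nrm K f = (\<Sum>(i,j)\<in>bx K. \<bar>cf f i j\<bar>)"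

lemma in_bx: "total_degree f \<le> K \<Longrightarrow> cf f i j \<noteq> 0 \<Longrightarrow> (i, j) \<in> bx K"
  unfolding bx_def using tdeg_ge[of f i j] by auto

lemma nrm_pos: assumes "f \<noteq> 0" "total_degree f \<le> K" shows "nrm K f > 0"
proof -
  obtain i j where ij: "cf f i j \<noteq> 0" using tdeg_attained[OF assms(1)] by blast
  have "0 < \<bar>cf f i j\<bar>" using ij by auto
  also have "\<dots> \<le> nrm K f" unfolding nrm_def
    using member_le_sum[of "(i,j)" "bx K" "\<lambda>(i,j). \<bar>cf f i j\<bar>"] in_bx[OF assms(2) ij]
    by (auto simp: bx_def)
  finally show ?thesis .
qed

lemma nrm_conv: "conv F g \<Longrightarrow> (\<lambda>n. nrm K (F n)) \<longlonglongrightarrow> nrm K g"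
  unfolding nrm_def case_prod_unfold conv_def by (intro tendsto_sum tendsto_rabs) auto

lemma nrm_smult: "c > 0 \<Longrightarrow> nrm K (smult [:1 / c:] f) = nrm K f / c"
  unfolding nrm_def case_prod_unfold by (simp add: abs_mult sum_divide_distrib)

definition mkp :: "nat \<Rightarrow> (nat \<Rightarrow> nat \<Rightarrow> real) \<Rightarrow> real poly poly" where
  "mkp K L = (\<Sum>i\<le>K. monom (\<Sum>j\<le>K. monom (L i j) j) i)"

lemma cf_mkp: "cf (mkp K L) i j = (if i \<le> K \<and> j \<le> K then L i j else 0)"
proof -
  have e: "\<And>b p k. coeff (if b then p else 0) k = (if b then coeff p k else 0)" by simp
  show ?thesis unfolding mkp_def coeff_sum coeff_monom e by (simp add: coeff_sum)
qed


lemma key: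
  fixes p1 p2 :: "real poly poly" and e :: "nat \<Rightarrow> real"
  assumes p1: "p1 \<noteq> 0" and deg2: "total_degree p2 \<le> total_degree p1 + 1"
    and e0: "e \<longlonglongrightarrow> 0"
    and rdeg: "\<And>n. total_degree (r n) \<ge> 1"
    and fac: "\<And>n. p1 + smult [:e n:] p2 = (r n)^2 * s n"
  shows "has_multiple_factor p1"
proof -
  define d where "d = total_degree p1"
  define K where "K = d + 1"
  define P where "P n = p1 + smult [:e n:] p2" for n
  have convP: "conv P p1" unfolding conv_def P_def
  proof (intro allI)
    fix i j
    have "(\<lambda>n. cf p1 i j + e n * cf p2 i j) \<longlonglongrightarrow> cf p1 i j + 0 * cf p2 i j"
      by (intro tendsto_intros e0)
    then show "(\<lambda>n. cf (p1 + smult [:e n:] p2) i j) \<longlonglongrightarrow> cf p1 i j" by simp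
  qed
  obtain i0 j0 where ij0: "cf p1 i0 j0 \<noteq> 0" using tdeg_attained[OF p1] by blast
  have "eventually (\<lambda>n. cf (P n) i0 j0 \<noteq> 0) sequentially"
    using convP ij0 unfolding conv_def by (intro tendsto_imp_eventually_ne) auto
  then obtain N0 where N0: "\<And>n. n \<ge> N0 \<Longrightarrow> P n \<noteq> 0"
    unfolding eventually_sequentially by force
  have PK: "total_degree (P n) \<le> K" for n
    unfolding P_def K_def d_def
    by (intro tdeg_add_le) (use tdeg_smult_le[of "e n" p2] deg2 in auto)
  have facP: "P n = r n * r n * s n" for n using fac[of n] by (simp add: P_def power2_eq_square)
  have degs: "r n \<noteq> 0 \<and> s n \<noteq> 0 \<and> 2 * total_degree (r n) + total_degree (s n) \<le> K" if "n \<ge> N0" for n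
  proof -
    have nz: "r n \<noteq> 0" "s n \<noteq> 0" using N0[OF that] facP[of n] by auto
    have "total_degree (P n) = 2 * total_degree (r n) + total_degree (s n)"
      using nz by (simp add: facP tdeg_mult)
    then show ?thesis using nz PK[of n] by simp
  qed
  define f where "f n = (total_degree (r n), total_degree (s n))" for n
  have "f ` {N0..} \<subseteq> {..K} \<times> {..K}" using degs by (force simp: f_def)
  then have "finite (f ` {N0..})" by (rule finite_subset) auto
  then obtain km where "km \<in> f ` {N0..}" and infB: "infinite (f -` {km} \<inter> {N0..})"
    using inf_img_fin_domE'[of f "{N0..}"] infinite_Ici[of N0] by blast
  obtain k m where km: "km = (k, m)" by (cases km)
  define B where "B = f -` {km} \<inter> {N0..}"
  define \<nu> where "\<nu> = enumerate B"
  have smnu: "strict_mono \<nu>" unfolding \<nu>_def B_def using infB by (rule strict_mono_enumerate)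
  have nuB: "\<nu> n \<in> B" for n unfolding \<nu>_def B_def using infB by (rule enumerate_in_set)
  define R where "R n = r (\<nu> n)" for n
  define S where "S n = s (\<nu> n)" for n
  have RS: "R n \<noteq> 0" "S n \<noteq> 0" "total_degree (R n) = k" "total_degree (S n) = m"
     "P (\<nu> n) = R n * R n * S n" for n
    using degs[of "\<nu> n"] nuB[of n] facP[of "\<nu> n"]
    by (auto simp: B_def f_def km R_def S_def)
  have k1: "k \<ge> 1" using rdeg[of "\<nu> 0"] RS(3)[of 0] by (simp add: R_def)
  have kmK: "2 * k + m \<le> K" using degs[of "\<nu> 0"] nuB[of 0] RS(3,4)[of 0]
    by (auto simp: B_def R_def S_def)
  define a where "a n = nrm K (R n)" for n
  define b where "b n = nrm K (S n)" for n
  have apos: "a n > 0" for n unfolding a_def using RS(1,3)[of n] kmK by (intro nrm_pos) auto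
  have bpos: "b n > 0" for n unfolding b_def using RS(2,4)[of n] kmK by (intro nrm_pos) auto
  define R' where "R' n = smult [:1 / a n:] (R n)" for n
  define S' where "S' n = smult [:1 / b n:] (S n)" for n
  have cfR': "cf (R' n) i j = cf (R n) i j / a n" for n i j by (simp add: R'_def)
  have cfS': "cf (S' n) i j = cf (S n) i j / b n" for n i j by (simp add: S'_def)
  have le_nrm: "\<bar>cf g i j\<bar> \<le> nrm K g" if "(i, j) \<in> bx K" for g i j
    unfolding nrm_def
    using member_le_sum[of "(i,j)" "bx K" "\<lambda>(i,j). \<bar>cf g i j\<bar>"] that
    by (auto simp: bx_def)
  define u where "u n x = (case x of (True, i, j) \<Rightarrow> cf (R' n) i j | (False, i, j) \<Rightarrow> cf (S' n) i j)"
    for n x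
  have fin: "finite ((UNIV::bool set) \<times> bx K)" unfolding bx_def by (intro finite_cartesian_product) auto
  have divb: "\<bar>x / y\<bar> \<le> 1" if "\<bar>x\<bar> \<le> y" "y > 0" for x y :: real
    using that by (simp add: abs_divide pos_divide_le_eq)
  have bnd: "\<bar>u n x\<bar> \<le> 1" if "x \<in> UNIV \<times> bx K" for n x
  proof -
    obtain t i j where x: "x = (t, i, j)" by (cases x) auto
    have ij: "(i, j) \<in> bx K" using that x by auto
    have 1: "\<bar>cf (R n) i j / a n\<bar> \<le> 1"
      using le_nrm[OF ij, of "R n"] apos[of n] unfolding a_def by (intro divb) auto
    have 2: "\<bar>cf (S n) i j / b n\<bar> \<le> 1"
      using le_nrm[OF ij, of "S n"] bpos[of n] unfolding b_def by (intro divb) auto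
    show ?thesis
      using 1 2 by (cases t) (simp_all only: u_def x cfR' cfS' prod.case bool.case)
  qed
  obtain \<sigma> L where sig: "strict_mono \<sigma>"
    and Lim: "\<forall>x\<in>UNIV \<times> bx K. (\<lambda>n. u (\<sigma> n) x) \<longlonglongrightarrow> L x"
    using bw_finite[OF fin, of u 1] bnd by blast
  define r0 where "r0 = mkp K (\<lambda>i j. L (True, i, j))"
  define s0 where "s0 = mkp K (\<lambda>i j. L (False, i, j))"
  have convR: "conv (\<lambda>n. R' (\<sigma> n)) r0" unfolding conv_def
  proof (intro allI)
    fix i j
    show "(\<lambda>n. cf (R' (\<sigma> n)) i j) \<longlonglongrightarrow> cf r0 i j"
    proof (cases "i \<le> K \<and> j \<le> K")
      case True
      then show ?thesis using Lim[rule_format, of "(True, i, j)"]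
        by (simp add: u_def r0_def cf_mkp bx_def)
    next
      case False
      then have "cf (R n) i j = 0" for n using in_bx[of "R n" K i j] RS(3)[of n] kmK
        by (auto simp: bx_def)
      then show ?thesis using False by (auto simp: cfR' r0_def cf_mkp)
    qed
  qed
  have convS: "conv (\<lambda>n. S' (\<sigma> n)) s0" unfolding conv_def
  proof (intro allI)
    fix i j
    show "(\<lambda>n. cf (S' (\<sigma> n)) i j) \<longlonglongrightarrow> cf s0 i j"
    proof (cases "i \<le> K \<and> j \<le> K")
      case True
      then show ?thesis using Lim[rule_format, of "(False, i, j)"]
        by (simp add: u_def s0_def cf_mkp bx_def)
    next
      case False
      then have "cf (S n) i j = 0" for n using in_bx[of "S n" K i j] RS(4)[of n] kmK
        by (auto simp: bx_def)
      then show ?thesis using False by (auto simp: cfS' s0_def cf_mkp)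
    qed
  qed
  have n1: "nrm K (R' n) = 1" for n
    unfolding R'_def using apos[of n] by (simp add: nrm_smult a_def)
  have "(\<lambda>n. nrm K (R' (\<sigma> n))) \<longlonglongrightarrow> 1" by (simp add: n1)
  then have "nrm K r0 = 1" using nrm_conv[OF convR] LIMSEQ_unique by blast
  then have r0nz: "r0 \<noteq> 0" by (auto simp: nrm_def)
  have n2: "nrm K (S' n) = 1" for n
    unfolding S'_def using bpos[of n] by (simp add: nrm_smult b_def)
  have "(\<lambda>n. nrm K (S' (\<sigma> n))) \<longlonglongrightarrow> 1" by (simp add: n2)
  then have "nrm K s0 = 1" using nrm_conv[OF convS] LIMSEQ_unique by blast
  then have s0nz: "s0 \<noteq> 0" by (auto simp: nrm_def)
  define Q where "Q n = R' (\<sigma> n) * R' (\<sigma> n) * S' (\<sigma> n)" for n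
  define q0 where "q0 = r0 * r0 * s0"
  have convQ: "conv Q q0" unfolding Q_def q0_def
    by (intro conv_mult convR convS)
  have q0nz: "q0 \<noteq> 0" using r0nz s0nz by (simp add: q0_def)
  define c where "c n = a (\<sigma> n) * a (\<sigma> n) * b (\<sigma> n)" for n
  have PQ: "cf (P (\<nu> (\<sigma> n))) i j = c n * cf (Q n) i j" for n i j
  proof -
    have e1: "R m = smult [:a m:] (R' m)" for m using apos[of m] by (simp add: R'_def one_pCons[symmetric])
    have e2: "S m = smult [:b m:] (S' m)" for m using bpos[of m] by (simp add: S'_def one_pCons[symmetric])
    have "R m * R m * S m = smult [:a m * a m * b m:] (R' m * R' m * S' m)" for m
      by (subst (1 2) e1, subst e2) (simp add: mult_smult_left mult_smult_right smult_smult)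
    then have "P (\<nu> (\<sigma> n)) = smult [:c n:] (Q n)"
      unfolding RS(5) Q_def c_def by simp
    then show ?thesis by simp
  qed
  have convP': "conv (\<lambda>n. P (\<nu> (\<sigma> n))) p1"
    using conv_subseq[OF convP strict_mono_o[OF smnu sig]] by (simp add: o_def)
  obtain a0 b0 where ab0: "cf q0 a0 b0 \<noteq> 0" using tdeg_attained[OF q0nz] by blast
  define cc where "cc = cf p1 a0 b0 / cf q0 a0 b0"
  have ev: "eventually (\<lambda>n. cf (Q n) a0 b0 \<noteq> 0) sequentially"
    using convQ ab0 unfolding conv_def by (intro tendsto_imp_eventually_ne) auto
  have lim0: "(\<lambda>n. cf (P (\<nu> (\<sigma> n))) a0 b0 / cf (Q n) a0 b0) \<longlonglongrightarrow> cc"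
    unfolding cc_def using convP' convQ ab0 unfolding conv_def by (intro tendsto_divide) auto
  have ev2: "eventually (\<lambda>n. cf (P (\<nu> (\<sigma> n))) a0 b0 / cf (Q n) a0 b0 = c n) sequentially"
    using ev by eventually_elim (simp add: PQ)
  have cconv: "c \<longlonglongrightarrow> cc" using tendsto_cong[OF ev2] lim0 by simp
  have p1eq: "cf p1 i j = cc * cf q0 i j" for i j
  proof -
    have "(\<lambda>n. cf (P (\<nu> (\<sigma> n))) i j) \<longlonglongrightarrow> cc * cf q0 i j"
      unfolding PQ using cconv convQ unfolding conv_def by (intro tendsto_mult) auto
    with convP' show ?thesis unfolding conv_def using LIMSEQ_unique by blast
  qed
  have p1q: "p1 = smult [:cc:] q0" by (intro poly_eqI) (simp add: p1eq)
  have ccnz: "cc \<noteq> 0" using p1 p1q by auto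
  have degr0: "total_degree r0 \<le> k" unfolding tdeg_le_iff
  proof (intro allI impI)
    fix i j assume nz: "cf r0 i j \<noteq> 0"
    show "i + j \<le> k"
    proof (rule ccontr)
      assume "\<not> i + j \<le> k"
      then have "cf (R n) i j = 0" for n using tdeg_ge[of "R n" i j] RS(3)[of n] by auto
      then have "(\<lambda>n. cf (R' (\<sigma> n)) i j) \<longlonglongrightarrow> 0" by (simp add: cfR')
      with convR nz show False unfolding conv_def using LIMSEQ_unique by blast
    qed
  qed
  have degs0: "total_degree s0 \<le> m" unfolding tdeg_le_iff
  proof (intro allI impI)
    fix i j assume nz: "cf s0 i j \<noteq> 0"
    show "i + j \<le> m"
    proof (rule ccontr)
      assume "\<not> i + j \<le> m"
      then have "cf (S n) i j = 0" for n using tdeg_ge[of "S n" i j] RS(4)[of n] by auto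
      then have "(\<lambda>n. cf (S' (\<sigma> n)) i j) \<longlonglongrightarrow> 0" by (simp add: cfS')
      with convS nz show False unfolding conv_def using LIMSEQ_unique by blast
    qed
  qed
  have "d = total_degree q0" unfolding d_def p1q using ccnz by (rule tdeg_smult)
  also have "\<dots> = 2 * total_degree r0 + total_degree s0"
    using r0nz s0nz by (simp add: q0_def tdeg_mult)
  finally have "total_degree r0 = k" using degr0 degs0 kmK unfolding K_def by linarith
  then have "total_degree r0 \<ge> 1" using k1 by simp
  moreover have "r0 ^ 2 dvd p1"
    unfolding p1q q0_def power2_eq_square
    by (metis dvd_triv_left mult_smult_right)
  ultimately show ?thesis unfolding has_multiple_factor_def by blast
qed


theorem mainTheorem4:
  fixes p1 p2 :: "real poly poly"
  assumes "p1 \<noteq> 0"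
    and "total_degree p2 \<le> total_degree p1 + 1"
    and "\<not> has_multiple_factor p1"
  shows "\<exists>\<epsilon>0>0. \<forall>\<epsilon>::real. \<bar>\<epsilon>\<bar> < \<epsilon>0 \<longrightarrow>
           \<not> has_multiple_factor (p1 + smult [:\<epsilon>:] p2)"
proof (rule ccontr)
  assume H: "\<not> ?thesis"
  have "\<forall>n::nat. \<exists>\<epsilon>. \<bar>\<epsilon>\<bar> < 1 / real (Suc n) \<and> has_multiple_factor (p1 + smult [:\<epsilon>:] p2)"
  proof
    fix n :: nat
    have "1 / real (Suc n) > 0" by simp
    then show "\<exists>\<epsilon>. \<bar>\<epsilon>\<bar> < 1 / real (Suc n) \<and> has_multiple_factor (p1 + smult [:\<epsilon>:] p2)"
      using H by blast
  qed
  then obtain e where e: "\<And>n. \<bar>e n\<bar> < 1 / real (Suc n)"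
    and he: "\<And>n. has_multiple_factor (p1 + smult [:e n:] p2)" by metis
  have "\<forall>n. \<exists>r s. total_degree r \<ge> 1 \<and> p1 + smult [:e n:] p2 = r ^ 2 * s"
    using he unfolding has_multiple_factor_def dvd_def by blast
  then obtain r s where rs: "\<And>n. total_degree (r n) \<ge> 1"
    "\<And>n. p1 + smult [:e n:] p2 = (r n) ^ 2 * s n" by metis
  have e0: "e \<longlonglongrightarrow> 0"
    by (rule LIMSEQ_norm_0) (use e in \<open>auto intro: less_imp_le\<close>)
  have "has_multiple_factor p1"
    by (rule key[OF assms(1,2) e0 rs(1) rs(2)])
  with assms(3) show False by blast
qed

end
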